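(* Let $\mathcal{G}$ be a finite weighted coloured--edge graph with $n\ge 2$ vertices and $k$ colours, and let $u\ne v$ be vertices. Then any set $S$ of minimal paths from $u$ to $v$ that are pairwise incomparable has $|S|\le k^{n-1}$. Equivalently, the set of distinct weight vectors $(\omega_c(p))_{c\in M}$ of minimal paths $p$ from $u$ to $v$ has at most $k^{n-1}$ elements.
   Context: A weighted coloured--edge graph $\mathcal{G}=\langle V,E,\omega,\lambda\rangle$ consists of a directed multigraph with vertex set $V$ and edge set $E$ (each edge $e$ has an initial vertex and a distinct terminal vertex; multiple edges between the same ordered pair are allowed), a weight function $\omega:E\to\mathbb{R}^+$ (strictly positive reals), and a surjective colour function $\lambda:E\to M$ onto a set $M$ of colours; $k=|M|$. A path from $u$ to $v$ is a sequence of edges $e_1,\dots,e_l$ ($l\ge1$) such that the initial vertex of $e_1$ is $u$, the terminal vertex of $e_l$ is $v$, the terminal vertex of $e_i$ is the initial vertex of $e_{i+1}$, and no vertex is visited twice. For a path $p$ and colour $c$, $\omega_c(p)$ is the sum of $\omega(e)$ over edges $e$ of $p$ with $\lambda(e)=c$. For paths $p,q$ from $u$ to $v$, $p\le q$ means $\omega_c(p)\le\omega_c(q)$ for all $c\in M$; $p,q$ are incomparable if neither $p\le q$ nor $q\le p$. A path $p$ from $u$ to $v$ is minimal if there is no path $q$ from $u$ to $v$ with $q\le p$ and $\omega_c(q)<\omega_c(p)$ for some colour $c$. *)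

theory Defs
  imports Complex_Main "HOL-Library.FuncSet"
begin

text \<open>A weighted coloured-edge graph: vertex set V, edge set E (abstract edges of
type 'e, allowing multi-edges), initial vertex src, terminal vertex tgt, weight w,
colour col, colour set M.\<close>

definition wce_graph ::
  "'v set \<Rightarrow> 'e set \<Rightarrow> ('e \<Rightarrow> 'v) \<Rightarrow> ('e \<Rightarrow> 'v) \<Rightarrow> ('e \<Rightarrow> real) \<Rightarrow> ('e \<Rightarrow> 'c) \<Rightarrow> 'c set \<Rightarrow> bool"
where
  "wce_graph V E src tgt w col M \<longleftrightarrow>
     (\<forall>e\<in>E. src e \<in> V \<and> tgt e \<in> V \<and> src e \<noteq> tgt e \<and> w e > 0) \<and> col ` E = M"

definition path_verts :: "('e \<Rightarrow> 'v) \<Rightarrow> ('e \<Rightarrow> 'v) \<Rightarrow> 'e list \<Rightarrow> 'v list" where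
  "path_verts src tgt p = src (List.hd p) # map tgt p"

definition is_path ::
  "'e set \<Rightarrow> ('e \<Rightarrow> 'v) \<Rightarrow> ('e \<Rightarrow> 'v) \<Rightarrow> 'v \<Rightarrow> 'v \<Rightarrow> 'e list \<Rightarrow> bool"
where
  "is_path E src tgt u v p \<longleftrightarrow>
     p \<noteq> [] \<and> set p \<subseteq> E \<and> src (List.hd p) = u \<and> tgt (last p) = v \<and>
     (\<forall>i. Suc i < length p \<longrightarrow> tgt (p ! i) = src (p ! Suc i)) \<and>
     distinct (path_verts src tgt p)"

definition cweight :: "('e \<Rightarrow> real) \<Rightarrow> ('e \<Rightarrow> 'c) \<Rightarrow> 'c \<Rightarrow> 'e list \<Rightarrow> real" where
  "cweight w col c p = sum_list (map (\<lambda>e. if col e = c then w e else 0) p)"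

definition path_le :: "('e \<Rightarrow> real) \<Rightarrow> ('e \<Rightarrow> 'c) \<Rightarrow> 'c set \<Rightarrow> 'e list \<Rightarrow> 'e list \<Rightarrow> bool" where
  "path_le w col M p q \<longleftrightarrow> (\<forall>c\<in>M. cweight w col c p \<le> cweight w col c q)"

definition incomparable :: "('e \<Rightarrow> real) \<Rightarrow> ('e \<Rightarrow> 'c) \<Rightarrow> 'c set \<Rightarrow> 'e list \<Rightarrow> 'e list \<Rightarrow> bool" where
  "incomparable w col M p q \<longleftrightarrow> \<not> path_le w col M p q \<and> \<not> path_le w col M q p"

definition minimal_path ::
  "'e set \<Rightarrow> ('e \<Rightarrow> 'v) \<Rightarrow> ('e \<Rightarrow> 'v) \<Rightarrow> ('e \<Rightarrow> real) \<Rightarrow> ('e \<Rightarrow> 'c) \<Rightarrow> 'c set \<Rightarrow> 'v \<Rightarrow> 'v \<Rightarrow> 'e list \<Rightarrow> bool"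
where
  "minimal_path E src tgt w col M u v p \<longleftrightarrow>
     is_path E src tgt u v p \<and>
     \<not> (\<exists>q. is_path E src tgt u v q \<and> path_le w col M q p \<and>
            (\<exists>c\<in>M. cweight w col c q < cweight w col c p))"

definition weight_vec :: "('e \<Rightarrow> real) \<Rightarrow> ('e \<Rightarrow> 'c) \<Rightarrow> 'c set \<Rightarrow> 'e list \<Rightarrow> ('c \<Rightarrow> real)" where
  "weight_vec w col M p = (\<lambda>c\<in>M. cweight w col c p)"

end

theory Submission
  imports Defs
begin

type_synonym ('v,'c) ed = "'v \<times> 'c \<times> real \<times> 'v"

abbreviation esrc :: "('v,'c) ed \<Rightarrow> 'v" where "esrc e \<equiv> fst e"
abbreviation ecol :: "('v,'c) ed \<Rightarrow> 'c" where "ecol e \<equiv> fst (snd e)"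
abbreviation ewt :: "('v,'c) ed \<Rightarrow> real" where "ewt e \<equiv> fst (snd (snd e))"
abbreviation etgt :: "('v,'c) ed \<Rightarrow> 'v" where "etgt e \<equiv> snd (snd (snd e))"

fun sp :: "('v,'c) ed set \<Rightarrow> 'v set \<Rightarrow> 'v \<Rightarrow> 'v \<Rightarrow> ('v,'c) ed list \<Rightarrow> bool" where
  "sp E A x v [] \<longleftrightarrow> x = v \<and> x \<notin> A"
| "sp E A x v (e#q) \<longleftrightarrow> e \<in> E \<and> esrc e = x \<and> x \<notin> A \<and> sp E (insert x A) (etgt e) v q"

definition vec :: "'c set \<Rightarrow> ('v,'c) ed list \<Rightarrow> 'c \<Rightarrow> real" where
  "vec M p = (\<lambda>c\<in>M. sum_list (map (\<lambda>e. if ecol e = c then ewt e else 0) p))"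

definition Mn :: "'c set \<Rightarrow> ('c \<Rightarrow> real) set \<Rightarrow> ('c \<Rightarrow> real) set" where
  "Mn M A = {x\<in>A. \<not>(\<exists>y\<in>A. (\<forall>c\<in>M. y c \<le> x c) \<and> (\<exists>c\<in>M. y c < x c))}"

lemma sp_start: "sp E A x v q \<Longrightarrow> x \<notin> A"
  by (cases q) auto

lemma sp_verts: "sp E A x v q \<Longrightarrow> \<forall>e\<in>set q. esrc e \<notin> A \<and> etgt e \<notin> A"
proof (induction q arbitrary: x A)
  case Nil then show ?case by simp
next
  case (Cons e q)
  then have "sp E (insert x A) (etgt e) v q" by simp
  from Cons.IH[OF this] sp_start[OF this] Cons.prems show ?case by auto
qed

lemma sp_sub: "sp E A x v q \<Longrightarrow> set q \<subseteq> E"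
  by (induction q arbitrary: x A) auto

lemma sp_change: "sp E A x v q \<Longrightarrow> set q \<subseteq> E2 \<Longrightarrow>
   B \<subseteq> A \<union> {y. y \<noteq> x \<and> (\<forall>e\<in>set q. etgt e \<noteq> y)} \<Longrightarrow> sp E2 B x v q"
proof (induction q arbitrary: x A B)
  case Nil then show ?case by auto
next
  case (Cons e q)
  have 1: "sp E (insert x A) (etgt e) v q" using Cons.prems by simp
  have 2: "insert x B \<subseteq> insert x A \<union> {y. y \<noteq> etgt e \<and> (\<forall>e\<in>set q. etgt e \<noteq> y)}"
    using Cons.prems(3) by auto
  have "sp E2 (insert x B) (etgt e) v q" using Cons.IH[OF 1 _ 2] Cons.prems(2) by simp
  then show ?case using Cons.prems by auto
qed

lemma sp_split: "sp E A x v q \<Longrightarrow> y = x \<or> (\<exists>e\<in>set q. etgt e = y) \<Longrightarrow> \<exists>q1 q2 A'. q = q1 @ q2 \<and> sp E A' y v q2"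
proof (induction q arbitrary: x A)
  case Nil then show ?case by auto
next
  case (Cons e q)
  have 1: "sp E (insert x A) (etgt e) v q" using Cons.prems by simp
  show ?case
  proof (cases "y = x")
    case True then show ?thesis using Cons.prems by (metis append_Nil)
  next
    case False
    then have "y = etgt e \<or> (\<exists>e\<in>set q. etgt e = y)" using Cons.prems by auto
    from Cons.IH[OF 1 this] obtain q1 q2 A' where "q = q1 @ q2" "sp E A' y v q2" by blast
    then show ?thesis by (metis append_Cons)
  qed
qed

lemma sp_distinct: "sp E A x v q \<Longrightarrow> distinct q"
proof (induction q arbitrary: x A)
  case Nil then show ?case by simp
next
  case (Cons e q)
  have 1: "sp E (insert x A) (etgt e) v q" using Cons.prems by simp
  from sp_verts[OF 1] Cons.prems have "e \<notin> set q" by auto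
  with Cons.IH[OF 1] show ?case by simp
qed

lemma sp_finite: "finite E \<Longrightarrow> finite {q. sp E A x v q}"
  by (rule finite_subset[OF _ finite_subset_distinct[of E]]) (auto dest: sp_sub sp_distinct)

lemma vec_Cons: "vec M (e#p) = (\<lambda>c\<in>M. (if ecol e = c then ewt e else 0) + vec M p c)"
  by (auto simp: vec_def fun_eq_iff)

lemma vec_append: "vec M (p@q) = (\<lambda>c\<in>M. vec M p c + vec M q c)"
  by (auto simp: vec_def fun_eq_iff)

lemma vec_nonneg: "\<forall>e\<in>set p. ewt e \<ge> 0 \<Longrightarrow> c \<in> M \<Longrightarrow> vec M p c \<ge> 0"
  unfolding vec_def by (auto intro!: sum_list_nonneg)

lemma vec_ext_img: "x \<in> vec M ` A \<Longrightarrow> x \<in> extensional M" by (auto simp: vec_def)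

lemma vec_ext: "vec M p \<in> extensional M" by (simp add: vec_def)

lemma Mn_D: "x \<in> Mn M A \<Longrightarrow> y \<in> A \<Longrightarrow> \<forall>c\<in>M. y c \<le> x c \<Longrightarrow> \<not>(\<exists>c\<in>M. y c < x c)"
  unfolding Mn_def by blast

lemma Mn_I: "x \<in> A \<Longrightarrow> (\<And>y. y\<in>A \<Longrightarrow> \<forall>c\<in>M. y c \<le> x c \<Longrightarrow> \<exists>c\<in>M. y c < x c \<Longrightarrow> False) \<Longrightarrow> x \<in> Mn M A"
  unfolding Mn_def by blast

lemma Mn_in: "x \<in> Mn M A \<Longrightarrow> x \<in> A"
  unfolding Mn_def by blast

lemma Mn_sub: "Mn M A \<subseteq> A" by (auto simp: Mn_def)

lemma Mn_union: "x \<in> Mn M A \<Longrightarrow> x \<in> B \<Longrightarrow> B \<subseteq> A \<Longrightarrow> x \<in> Mn M B"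
  by (auto simp: Mn_def)

lemma ext_eq: "(x::'c \<Rightarrow> real) \<in> extensional M \<Longrightarrow> y \<in> extensional M \<Longrightarrow> \<forall>c\<in>M. y c \<le> x c \<Longrightarrow>
   \<not>(\<exists>c\<in>M. y c < x c) \<Longrightarrow> y = x"
  proof (rule extensionalityI[of _ M])
  fix c assume c: "c \<in> M"
  assume a: "\<forall>c\<in>M. y c \<le> x c" "\<not>(\<exists>c\<in>M. y c < x c)"
  from a c have "y c \<le> x c" "\<not> y c < x c" by auto
  then show "y c = x c" by linarith
qed

abbreviation wf_graph :: "'v set \<Rightarrow> ('v,'c) ed set \<Rightarrow> 'c set \<Rightarrow> bool" where
  "wf_graph V E M \<equiv> finite V \<and> finite E \<and> (\<forall>e\<in>E. esrc e \<in> V \<and> etgt e \<in> V \<and> esrc e \<noteq> etgt e \<and> ewt e \<ge> 0 \<and> ecol e \<in> M)"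

lemma single:
  fixes E :: "('v,'c) ed set"
  assumes IH: "\<And>V' (E'::('v,'c) ed set) u' v'. wf_graph V' E' M \<Longrightarrow> u'\<in>V' \<Longrightarrow> v'\<in>V' \<Longrightarrow> u'\<noteq>v' \<Longrightarrow>
      card V' < card V \<Longrightarrow> card (Mn M (vec M ` {p. sp E' {} u' v' p})) \<le> card M ^ (card V' - 1)"
  and G: "wf_graph V E M" and fM: "finite M"
  and uv: "u \<in> V" "v \<in> V" "u \<noteq> v"
  and mono: "\<forall>e\<in>E. esrc e = u \<longrightarrow> ecol e = c"
  shows "card (Mn M (vec M ` {p. sp E {} u v p})) \<le> card M ^ (card V - 2)"
proof -
  let ?P = "{p. sp E {} u v p}"
  define Out where "Out = {e\<in>E. esrc e = u}"
  have fE: "finite E" using G by simp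
  have pform: "\<exists>e p'. p = e#p' \<and> e \<in> Out \<and> sp E {u} (etgt e) v p'" if "sp E {} u v p" for p
    using that uv by (cases p) (auto simp: Out_def)
  have wnn: "\<forall>e\<in>set p. ewt e \<ge> 0" if "sp E A x y p" for A x y p
    using sp_sub[OF that] G by auto
  show ?thesis
  proof (cases "Out = {}")
    case True
    then have "?P = {}" using pform by blast
    then show ?thesis by (simp add: Mn_def)
  next
    case False
    have fO: "finite Out" using fE by (simp add: Out_def)
    define m where "m = Min (ewt ` Out)"
    have "m \<in> ewt ` Out" using fO False by (simp add: m_def)
    then obtain e0 where e0: "e0 \<in> Out" "ewt e0 = m" by auto
    have e0min: "\<forall>e\<in>Out. ewt e0 \<le> ewt e" using fO e0 by (simp add: m_def)
    define a where "a = ewt e0"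
    define xs where "xs = etgt e0"
    have ce0: "ecol e0 = c" using e0 mono by (simp add: Out_def)
    have cM: "c \<in> M" using e0 G ce0 by (auto simp: Out_def)
    have kpos: "card M \<ge> 1" using cM fM by (metis One_nat_def Suc_leI card_gt_0_iff empty_iff)
    have e0E: "e0 \<in> E" "esrc e0 = u" using e0 by (auto simp: Out_def)
    have xsV: "xs \<in> V" "xs \<noteq> u" using G e0E by (auto simp: xs_def)
    show ?thesis
    proof (cases "xs = v")
      case True
      have p0: "sp E {} u v [e0]" using e0E True uv by (simp add: xs_def)
      have "Mn M (vec M ` ?P) \<subseteq> {vec M [e0]}"
      proof
        fix x assume x: "x \<in> Mn M (vec M ` ?P)"
        then obtain p where p: "sp E {} u v p" "x = vec M p" by (auto simp: Mn_def)
        from pform[OF p(1)] obtain e p' where ep: "p = e#p'" "e \<in> Out" "sp E {u} (etgt e) v p'" by blast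
        have le: "\<forall>c'\<in>M. vec M [e0] c' \<le> x c'"
        proof
          fix c' assume c': "c' \<in> M"
          have ce: "ecol e = c" using ep mono by (simp add: Out_def)
          have "vec M p' c' \<ge> 0" using vec_nonneg[OF wnn[OF ep(3)] c'] .
          moreover have "ewt e0 \<le> ewt e" using e0min ep by auto
          moreover have "ewt e0 \<ge> 0" using G e0E by auto
          ultimately show "vec M [e0] c' \<le> x c'" using c' ce ce0
            by (simp add: p ep vec_Cons vec_def)
        qed
        have "vec M [e0] \<in> vec M ` ?P" using p0 by blast
        then have "\<not>(\<exists>c'\<in>M. vec M [e0] c' < x c')" using x le unfolding Mn_def by blast
        then have "vec M [e0] = x" using ext_eq[OF _ vec_ext le] p by (simp add: vec_ext)
        then show "x \<in> {vec M [e0]}" by simp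
      qed
      then have "card (Mn M (vec M ` ?P)) \<le> 1" by (metis card.insert card.empty card_mono finite.emptyI finite.insertI empty_iff One_nat_def)
      also have "1 \<le> card M ^ (card V - 2)" using kpos by simp
      finally show ?thesis .
    next
      case False
      define E2 where "E2 = {e\<in>E. esrc e \<noteq> u \<and> etgt e \<noteq> u} \<union> (\<lambda>e. (xs, c, ewt e - a, etgt e)) ` {e\<in>Out. etgt e \<noteq> xs}"
      define V2 where "V2 = V - {u}"
      define T where "T y = (\<lambda>c'\<in>M. (if c = c' then a else 0) + y c')" for y :: "'c \<Rightarrow> real"
      let ?Q = "{q. sp E2 {} xs v q}"
      let ?Y = "vec M ` ?Q"
      have fV: "finite V" using G by simp
      have cV2: "card V2 = card V - 1" using uv fV by (simp add: V2_def)
      have cV1: "card V \<ge> 1" using uv fV by (metis One_nat_def Suc_leI card_gt_0_iff empty_iff)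
      have cV2l: "card V2 < card V" using cV2 cV1 by simp
      have G2: "wf_graph V2 E2 M"
      proof -
        have "finite E2" using fE fO by (simp add: E2_def)
        moreover have "\<forall>e\<in>E2. esrc e \<in> V2 \<and> etgt e \<in> V2 \<and> esrc e \<noteq> etgt e \<and> ewt e \<ge> 0 \<and> ecol e \<in> M"
          using G xsV e0min cM unfolding E2_def V2_def Out_def a_def by (auto; blast)
        ultimately show ?thesis using fV by (simp add: V2_def)
      qed
      have xs2: "xs \<in> V2" "v \<in> V2" "xs \<noteq> v" using xsV uv False by (auto simp: V2_def)
      have IH2: "card (Mn M ?Y) \<le> card M ^ (card V2 - 1)" using IH[OF G2 xs2 cV2l] .
      have E2old: "\<forall>e\<in>E2. esrc e \<noteq> xs \<longrightarrow> e \<in> E \<and> esrc e \<noteq> u \<and> etgt e \<noteq> u" by (auto simp: E2_def)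
      have Eu: "\<forall>e\<in>E. esrc e = u \<longrightarrow> etgt e \<noteq> u" using G by auto
      have ae: "\<forall>e\<in>Out. a \<le> ewt e" using e0min by (simp add: a_def)
      have B_sub: "T ` ?Y \<subseteq> vec M ` ?P"
      proof
        fix z assume "z \<in> T ` ?Y"
        then obtain q where q: "sp E2 {} xs v q" "z = T (vec M q)" by auto
        from q(1) False obtain e1 q' where eq: "q = e1#q'" "e1 \<in> E2" "esrc e1 = xs" "sp E2 {xs} (etgt e1) v q'"
          by (cases q) auto
        have q'old: "\<forall>e\<in>set q'. e \<in> E \<and> esrc e \<noteq> u \<and> etgt e \<noteq> u"
          using sp_verts[OF eq(4)] sp_sub[OF eq(4)] E2old by auto
        show "z \<in> vec M ` ?P"
        proof (cases "e1 \<in> E \<and> esrc e1 \<noteq> u \<and> etgt e1 \<noteq> u")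
          case True
          have "sp E {u} xs v q"
            by (rule sp_change[OF q(1)]) (use True q'old eq xsV in auto)
          then have "sp E {} u v (e0 # q)" using e0E xs_def by simp
          moreover have "vec M (e0#q) = z" using ce0 unfolding q(2) T_def a_def by (simp add: vec_Cons)
          ultimately show ?thesis by blast
        next
          case False
          then obtain e where e: "e \<in> Out" "etgt e \<noteq> xs" "e1 = (xs, c, ewt e - a, etgt e)"
            using eq(2) eq(3) xsV unfolding E2_def by auto
          have eE: "e \<in> E" "esrc e = u" "ecol e = c" using e mono by (auto simp: Out_def)
          have eq4: "sp E2 {xs} (etgt e) v q'" using eq(4) e(3) by simp
          have "sp E {u} (etgt e) v q'"
            by (rule sp_change[OF eq4]) (use q'old e eE Eu in auto)
          then have "sp E {} u v (e # q')" using eE by simp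
          moreover have "vec M (e#q') = z" using eE
            by (auto simp: vec_Cons T_def q(2) eq(1) e(3) fun_eq_iff)
          ultimately show ?thesis by blast
        qed
      qed
      have dom: "\<forall>x\<in>vec M ` ?P. \<exists>b\<in>T ` ?Y. \<forall>c'\<in>M. b c' \<le> x c'"
      proof
        fix x assume "x \<in> vec M ` ?P"
        then obtain p where p: "sp E {} u v p" "x = vec M p" by auto
        from pform[OF p(1)] obtain e p' where ep: "p = e#p'" "e \<in> Out" "sp E {u} (etgt e) v p'" by blast
        have eE: "e \<in> E" "esrc e = u" "ecol e = c" using ep mono by (auto simp: Out_def)
        have p'E: "\<forall>e'\<in>set p'. e' \<in> E \<and> esrc e' \<noteq> u \<and> etgt e' \<noteq> u"
          using sp_verts[OF ep(3)] sp_sub[OF ep(3)] by auto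
        have ale: "a \<le> ewt e" using ae ep by auto
        show "\<exists>b\<in>T ` ?Y. \<forall>c'\<in>M. b c' \<le> x c'"
        proof (cases "xs = etgt e \<or> (\<exists>e'\<in>set p'. etgt e' = xs)")
          case True
          from sp_split[OF ep(3) True] obtain q1 q2 A' where s: "p' = q1 @ q2" "sp E A' xs v q2" by blast
          have "sp E2 {} xs v q2"
            by (rule sp_change[OF s(2)]) (use p'E s(1) in \<open>auto simp: E2_def\<close>)
          then have inY: "T (vec M q2) \<in> T ` ?Y" by blast
          have q1nn: "\<forall>c'\<in>M. vec M q1 c' \<ge> 0"
            using vec_nonneg wnn[OF ep(3)] s(1) by (metis Un_iff set_append)
          have "\<forall>c'\<in>M. T (vec M q2) c' \<le> x c'"
            using q1nn ale eE by (auto simp: T_def p(2) ep(1) s(1) vec_Cons vec_append)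
          with inY show ?thesis by blast
        next
          case False
          let ?e1 = "(xs, c, ewt e - a, etgt e)"
          have e1: "?e1 \<in> E2" using ep False by (auto simp: E2_def)
          have "sp E2 {xs} (etgt e) v p'"
            by (rule sp_change[OF ep(3)]) (use p'E False in \<open>auto simp: E2_def\<close>)
          then have "sp E2 {} xs v (?e1 # p')" using e1 by simp
          then have inY: "T (vec M (?e1 # p')) \<in> T ` ?Y" by blast
          have "T (vec M (?e1 # p')) = x" using eE
            by (auto simp: vec_Cons T_def p(2) ep(1) fun_eq_iff)
          with inY show ?thesis by force
        qed
      qed
      have TextI: "b \<in> extensional M" if "b \<in> T ` A" for b A using that by (auto simp: T_def)
      have sub1: "Mn M (vec M ` ?P) \<subseteq> Mn M (T ` ?Y)"
      proof
        fix x assume x: "x \<in> Mn M (vec M ` ?P)"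
        then have xP: "x \<in> vec M ` ?P" by (rule Mn_in)
        have "\<exists>b\<in>T ` ?Y. \<forall>c'\<in>M. b c' \<le> x c'" using dom xP by (rule bspec)
        then obtain b where b: "b \<in> T ` ?Y" "\<forall>c'\<in>M. b c' \<le> x c'" by (rule bexE)
        have bP: "b \<in> vec M ` ?P" using B_sub b(1) by (rule subsetD)
        have nl: "\<not>(\<exists>c'\<in>M. b c' < x c')" by (rule Mn_D[OF x bP b(2)])
        have xe: "x \<in> extensional M" using xP by (rule vec_ext_img)
        have be: "b \<in> extensional M" using b(1) by (rule TextI)
        have bx: "b = x" by (rule ext_eq[OF xe be b(2) nl])
        have "x \<in> T ` ?Y" using b(1) unfolding bx .
        then show "x \<in> Mn M (T ` ?Y)" by (rule Mn_union[OF x _ B_sub])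
      qed
      have sub2: "Mn M (T ` ?Y) \<subseteq> T ` Mn M ?Y"
      proof
        fix z assume z: "z \<in> Mn M (T ` ?Y)"
        then have "z \<in> T ` ?Y" by (rule Mn_in)
        then obtain y where y: "z = T y" "y \<in> ?Y" by (rule imageE)
        have "y \<in> Mn M ?Y"
        proof (rule Mn_I[OF y(2)])
          fix y' assume y': "y' \<in> ?Y" "\<forall>c'\<in>M. y' c' \<le> y c'" "\<exists>c'\<in>M. y' c' < y c'"
          have 1: "T y' \<in> T ` ?Y" using y'(1) by (rule imageI)
          have 2: "\<forall>c'\<in>M. T y' c' \<le> z c'" using y'(2) by (simp add: T_def y(1))
          have 3: "\<exists>c'\<in>M. T y' c' < z c'" using y'(3) by (auto simp: T_def y(1))
          show False using Mn_D[OF z 1 2] 3 by blast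
        qed
        then show "z \<in> T ` Mn M ?Y" unfolding y(1) by (rule imageI)
      qed
      have fE2: "finite E2" using G2 by simp
      have finQ: "finite ?Q" by (rule sp_finite[OF fE2])
      have finY: "finite ?Y" by (rule finite_imageI[OF finQ])
      have finMY: "finite (Mn M ?Y)" by (rule finite_subset[OF Mn_sub finY])
      have finTY: "finite (Mn M (T ` ?Y))" by (rule finite_subset[OF Mn_sub finite_imageI[OF finY]])
      have "card (Mn M (vec M ` ?P)) \<le> card (Mn M (T ` ?Y))" by (rule card_mono[OF finTY sub1])
      also have "\<dots> \<le> card (T ` Mn M ?Y)" by (rule card_mono[OF finite_imageI[OF finMY] sub2])
      also have "\<dots> \<le> card (Mn M ?Y)" by (rule card_image_le[OF finMY])
      also have "\<dots> \<le> card M ^ (card V2 - 1)" by (rule IH2)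
      also have "card V2 - 1 = card V - 2" using cV2 by simp
      finally show ?thesis .
    qed
  qed
qed

lemma main:
  fixes E :: "('v,'c) ed set"
  assumes "wf_graph V E M" "finite M" "u \<in> V" "v \<in> V" "u \<noteq> v"
  shows "card (Mn M (vec M ` {p. sp E {} u v p})) \<le> card M ^ (card V - 1)"
  using assms
proof (induction "card V" arbitrary: V E u v rule: less_induct)
  case less
  have G: "wf_graph V E M" and fM: "finite M" and uv: "u \<in> V" "v \<in> V" "u \<noteq> v" using less.prems by auto
  have IH': "card (Mn M (vec M ` {p. sp E' {} u' v' p})) \<le> card M ^ (card V' - 1)"
    if "wf_graph V' E' M" "u'\<in>V'" "v'\<in>V'" "u'\<noteq>v'" "card V' < card V"
    for V' :: "'v set" and E' :: "('v,'c) ed set" and u' v'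
    by (rule less.hyps[OF that(5) that(1) fM that(2-4)])
  define Ec where "Ec c = {e\<in>E. esrc e = u \<longrightarrow> ecol e = c}" for c
  let ?P = "{p. sp E {} u v p}"
  let ?Pc = "\<lambda>c. vec M ` {p. sp (Ec c) {} u v p}"
  have fE: "finite E" using G by simp
  have decomp: "vec M ` ?P \<subseteq> (\<Union>c\<in>M. ?Pc c)"
  proof
    fix x assume "x \<in> vec M ` ?P"
    then obtain p where p: "x = vec M p" "sp E {} u v p" by (rule imageE) simp
    then obtain e p' where ep: "p = e # p'" using uv by (cases p) auto
    have r: "sp E {u} (etgt e) v p'" using p(2) ep by simp
    have eE: "e \<in> E" using p(2) ep by simp
    have cM: "ecol e \<in> M" using G eE by auto
    have "set p \<subseteq> Ec (ecol e)" using sp_sub[OF p(2)] sp_verts[OF r] ep by (auto simp: Ec_def)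
    then have "sp (Ec (ecol e)) {} u v p" by (rule sp_change[OF p(2)]) simp
    then have "x \<in> ?Pc (ecol e)" unfolding p(1) by (rule imageI[OF CollectI])
    then show "x \<in> (\<Union>c\<in>M. ?Pc c)" using cM by (rule UN_I[rotated])
  qed
  have PcP: "?Pc c \<subseteq> vec M ` ?P" for c
  proof
    fix x assume "x \<in> ?Pc c"
    then obtain p where p: "x = vec M p" "sp (Ec c) {} u v p" by (rule imageE) simp
    have "set p \<subseteq> E" using sp_sub[OF p(2)] by (auto simp: Ec_def)
    then have "sp E {} u v p" by (rule sp_change[OF p(2)]) simp
    then show "x \<in> vec M ` ?P" unfolding p(1) by (rule imageI[OF CollectI])
  qed
  have bound_c: "card (Mn M (?Pc c)) \<le> card M ^ (card V - 2)" for c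
  proof -
    have G': "wf_graph V (Ec c) M" using G by (auto simp: Ec_def)
    have m: "\<forall>e\<in>Ec c. esrc e = u \<longrightarrow> ecol e = c" by (simp add: Ec_def)
    show ?thesis by (rule single[OF IH' G' fM uv m])
  qed
  have finc: "finite (Mn M (?Pc c))" for c
  proof -
    have "finite (Ec c)" using fE by (simp add: Ec_def)
    then have "finite {p. sp (Ec c) {} u v p}" by (rule sp_finite)
    then show ?thesis by (rule finite_subset[OF Mn_sub finite_imageI])
  qed
  have sub: "Mn M (vec M ` ?P) \<subseteq> (\<Union>c\<in>M. Mn M (?Pc c))"
  proof
    fix x assume x: "x \<in> Mn M (vec M ` ?P)"
    then have "x \<in> vec M ` ?P" by (rule Mn_in)
    then have "x \<in> (\<Union>c\<in>M. ?Pc c)" using decomp by (rule rev_subsetD)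
    then obtain c where c: "c \<in> M" "x \<in> ?Pc c" by (rule UN_E)
    have "x \<in> Mn M (?Pc c)" by (rule Mn_union[OF x c(2) PcP])
    then show "x \<in> (\<Union>c\<in>M. Mn M (?Pc c))" using c(1) by (rule UN_I[rotated])
  qed
  have cV: "card V \<ge> 2"
  proof -
    have "card {u, v} \<le> card V" using uv G by (intro card_mono) auto
    then show ?thesis using uv by simp
  qed
  have "card (Mn M (vec M ` ?P)) \<le> card (\<Union>c\<in>M. Mn M (?Pc c))"
    by (rule card_mono[OF finite_UN_I[OF fM finc] sub])
  also have "\<dots> \<le> (\<Sum>c\<in>M. card (Mn M (?Pc c)))" by (rule card_UN_le[OF fM])
  also have "\<dots> \<le> (\<Sum>c\<in>M. card M ^ (card V - 2))" by (rule sum_mono[OF bound_c])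
  also have "\<dots> = card M ^ (card V - 1)"
  proof -
    have "card V - 1 = Suc (card V - 2)" using cV by simp
    then show ?thesis by simp
  qed
  finally show ?case .
qed

lemma chn_Cons:
  "(\<forall>i. Suc i < length (e#e'#p) \<longrightarrow> tgt ((e#e'#p)!i) = src ((e#e'#p)!Suc i)) \<longleftrightarrow>
   tgt e = src e' \<and> (\<forall>i. Suc i < length (e'#p) \<longrightarrow> tgt ((e'#p)!i) = src ((e'#p)!Suc i))"
  (is "?L \<longleftrightarrow> ?R")
proof
  assume L: ?L
  have "tgt e = src e'" using spec[OF L, of 0] by simp
  moreover have "\<forall>i. Suc i < length (e'#p) \<longrightarrow> tgt ((e'#p)!i) = src ((e'#p)!Suc i)"
  proof (intro allI impI)
    fix i assume "Suc i < length (e'#p)"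
    then show "tgt ((e'#p)!i) = src ((e'#p)!Suc i)" using spec[OF L, of "Suc i"] by simp
  qed
  ultimately show ?R by simp
next
  assume R: ?R
  show ?L
  proof (intro allI impI)
    fix i assume i: "Suc i < length (e#e'#p)"
    show "tgt ((e#e'#p)!i) = src ((e#e'#p)!Suc i)"
    proof (cases i)
      case 0 then show ?thesis using R by simp
    next
      case (Suc j) then show ?thesis using R i by simp
    qed
  qed
qed

lemma aux_iff: "(a = x \<and> x \<notin> A \<and> (b = t \<and> T \<and> C \<and> distinct (b # m) \<and> set (b # m) \<inter> insert x A = {})) \<longleftrightarrow>
  (a = x \<and> T \<and> (t = b \<and> C) \<and> distinct (a # t # m) \<and> set (a # t # m) \<inter> A = {})"
  by auto

lemma Lsp:
  fixes src tgt :: "'e \<Rightarrow> 'v" and col :: "'e \<Rightarrow> 'c" and w :: "'e \<Rightarrow> real"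
  defines "f \<equiv> (\<lambda>e. (src e, col e, w e, tgt e))"
  shows "set p \<subseteq> E \<Longrightarrow> sp (f ` E) A x v (map f p) \<longleftrightarrow>
    (if p = [] then x = v \<and> x \<notin> A else src (hd p) = x \<and> tgt (last p) = v \<and>
      (\<forall>i. Suc i < length p \<longrightarrow> tgt (p!i) = src (p!Suc i)) \<and>
      distinct (path_verts src tgt p) \<and> set (path_verts src tgt p) \<inter> A = {})"
proof (induction p arbitrary: x A)
  case Nil then show ?case by simp
next
  case (Cons e p)
  have eE: "f e \<in> f ` E" using Cons.prems by simp
  show ?case
  proof (cases p)
    case Nil
    then show ?thesis using eE by (auto simp: f_def path_verts_def)
  next
    case (Cons e' p'')
    have IH: "sp (f ` E) (insert x A) (tgt e) v (map f p) \<longleftrightarrow>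
      src e' = tgt e \<and> tgt (last p) = v \<and>
      (\<forall>i. Suc i < length p \<longrightarrow> tgt (p!i) = src (p!Suc i)) \<and>
      distinct (path_verts src tgt p) \<and> set (path_verts src tgt p) \<inter> insert x A = {}"
      using Cons.IH[of "insert x A" "tgt e"] Cons.prems Cons by simp
    have pv: "path_verts src tgt (e#p) = src e # tgt e # map tgt p"
      by (simp add: path_verts_def)
    have pv2: "path_verts src tgt p = src e' # map tgt p" using Cons by (simp add: path_verts_def)
    have "sp (f ` E) A x v (map f (e#p)) \<longleftrightarrow> src e = x \<and> x \<notin> A \<and> sp (f ` E) (insert x A) (tgt e) v (map f p)"
      using eE by (simp add: f_def)
    also have "\<dots> \<longleftrightarrow> src e = x \<and> tgt (last (e#p)) = v \<and>
      (\<forall>i. Suc i < length (e#p) \<longrightarrow> tgt ((e#p)!i) = src ((e#p)!Suc i)) \<and>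
      distinct (path_verts src tgt (e#p)) \<and> set (path_verts src tgt (e#p)) \<inter> A = {}"
    proof -
      have l: "last (e#p) = last p" using Cons by simp
      have c: "(\<forall>i. Suc i < length (e#p) \<longrightarrow> tgt ((e#p)!i) = src ((e#p)!Suc i)) \<longleftrightarrow>
        tgt e = src e' \<and> (\<forall>i. Suc i < length p \<longrightarrow> tgt (p!i) = src (p!Suc i))"
        unfolding Cons by (rule chn_Cons)
      show ?thesis unfolding IH pv pv2 l c by (rule aux_iff)
    qed
    finally show ?thesis by simp
  qed
qed

theorem theorem2:
  fixes V :: "'v set" and E :: "'e set" and src tgt :: "'e \<Rightarrow> 'v"
    and w :: "'e \<Rightarrow> real" and col :: "'e \<Rightarrow> 'c" and M :: "'c set"
    and u v :: 'v and S :: "'e list set"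
  assumes "wce_graph V E src tgt w col M"
    and "finite V" and "finite E"
    and "card V \<ge> 2"
    and "u \<in> V" and "v \<in> V" and "u \<noteq> v"
    and "\<forall>p\<in>S. minimal_path E src tgt w col M u v p"
    and "\<forall>p\<in>S. \<forall>q\<in>S. p \<noteq> q \<longrightarrow> incomparable w col M p q"
  shows "finite S \<and> card S \<le> card M ^ (card V - 1)
    \<and> card (weight_vec w col M ` {p. minimal_path E src tgt w col M u v p}) \<le> card M ^ (card V - 1)"
proof -
  have Eok: "\<forall>e\<in>E. src e \<in> V \<and> tgt e \<in> V \<and> src e \<noteq> tgt e \<and> w e > 0" and MM: "col ` E = M"
    using assms(1) by (simp_all add: wce_graph_def)
  define f where "f = (\<lambda>e. (src e, col e, w e, tgt e))"
  have fM: "finite M" using MM assms(3) by blast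
  have G: "wf_graph V (f ` E) M"
  proof -
    have "\<forall>e'\<in>f ` E. esrc e' \<in> V \<and> etgt e' \<in> V \<and> esrc e' \<noteq> etgt e' \<and> ewt e' \<ge> 0 \<and> ecol e' \<in> M"
    proof
      fix e' assume "e' \<in> f ` E"
      then obtain e where e: "e' = f e" "e \<in> E" by (rule imageE) simp
      have "col e \<in> M" using MM e(2) by blast
      then show "esrc e' \<in> V \<and> etgt e' \<in> V \<and> esrc e' \<noteq> etgt e' \<and> ewt e' \<ge> 0 \<and> ecol e' \<in> M"
        using Eok e by (auto simp: f_def less_imp_le)
    qed
    then show ?thesis using assms(2,3) by simp
  qed
  have Lp: "is_path E src tgt u v p \<longleftrightarrow> sp (f ` E) {} u v (map f p)" if "set p \<subseteq> E" for p
    using Lsp[of p E src col w tgt "{}" u v, folded f_def, OF that] that assms(7)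
    by (auto simp: is_path_def)
  have wv: "weight_vec w col M p = vec M (map f p)" for p
    unfolding weight_vec_def cweight_def vec_def f_def
    apply (simp add: comp_def)
    apply (rule restrict_ext)
    apply (rule arg_cong[where f=sum_list])
    apply (rule map_cong)
     apply simp
    apply simp
    done
  let ?Path = "{p. is_path E src tgt u v p}"
  let ?Min = "{p. minimal_path E src tgt w col M u v p}"
  have img: "weight_vec w col M ` ?Path = vec M ` {q. sp (f ` E) {} u v q}"
  proof
    show "weight_vec w col M ` ?Path \<subseteq> vec M ` {q. sp (f ` E) {} u v q}"
    proof
      fix x assume "x \<in> weight_vec w col M ` ?Path"
      then obtain p where p: "x = weight_vec w col M p" "is_path E src tgt u v p" by (rule imageE) simp
      have "set p \<subseteq> E" using p(2) by (simp add: is_path_def)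
      then have "sp (f ` E) {} u v (map f p)" using Lp p(2) by blast
      then show "x \<in> vec M ` {q. sp (f ` E) {} u v q}" unfolding p(1) wv by (rule imageI[OF CollectI])
    qed
  next
    show "vec M ` {q. sp (f ` E) {} u v q} \<subseteq> weight_vec w col M ` ?Path"
    proof
      fix x assume "x \<in> vec M ` {q. sp (f ` E) {} u v q}"
      then obtain q where q: "x = vec M q" "sp (f ` E) {} u v q" by (rule imageE) simp
      define p where "p = map (inv_into E f) q"
      have qs: "set q \<subseteq> f ` E" by (rule sp_sub[OF q(2)])
      have mp: "map f p = q"
      proof (unfold p_def map_map, rule map_idI)
        fix y assume "y \<in> set q"
        then have "y \<in> f ` E" using qs by blast
        then show "(f \<circ> inv_into E f) y = y" by (simp add: f_inv_into_f)
      qed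
      have ps: "set p \<subseteq> E" unfolding p_def using qs by (auto intro: inv_into_into)
      have "is_path E src tgt u v p" using Lp[OF ps] q(2) mp by simp
      moreover have "x = weight_vec w col M p" using q(1) mp wv by simp
      ultimately show "x \<in> weight_vec w col M ` ?Path" by blast
    qed
  qed
  have wvc: "weight_vec w col M p c = cweight w col c p" if "c \<in> M" for p c
    using that by (simp add: weight_vec_def)
  have minimg: "weight_vec w col M ` ?Min = Mn M (weight_vec w col M ` ?Path)"
  proof
    show "weight_vec w col M ` ?Min \<subseteq> Mn M (weight_vec w col M ` ?Path)"
    proof
      fix x assume "x \<in> weight_vec w col M ` ?Min"
      then obtain p where p: "x = weight_vec w col M p" "minimal_path E src tgt w col M u v p" by (rule imageE) simp
      have pp: "is_path E src tgt u v p" using p(2) by (simp add: minimal_path_def)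
      show "x \<in> Mn M (weight_vec w col M ` ?Path)"
      proof (rule Mn_I)
        show "x \<in> weight_vec w col M ` ?Path" unfolding p(1) using pp by (rule imageI[OF CollectI])
      next
        fix y assume y: "y \<in> weight_vec w col M ` ?Path" "\<forall>c\<in>M. y c \<le> x c" "\<exists>c\<in>M. y c < x c"
        then obtain q where q: "y = weight_vec w col M q" "is_path E src tgt u v q" by (auto)
        have "path_le w col M q p" using y(2) q(1) p(1) wvc by (simp add: path_le_def)
        moreover have "\<exists>c\<in>M. cweight w col c q < cweight w col c p" using y(3) q(1) p(1) wvc by auto
        ultimately show False using p(2) q(2) unfolding minimal_path_def by blast
      qed
    qed
  next
    show "Mn M (weight_vec w col M ` ?Path) \<subseteq> weight_vec w col M ` ?Min"
    proof
      fix x assume x: "x \<in> Mn M (weight_vec w col M ` ?Path)"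
      then have "x \<in> weight_vec w col M ` ?Path" by (rule Mn_in)
      then obtain p where p: "x = weight_vec w col M p" "is_path E src tgt u v p" by (rule imageE) simp
      have "minimal_path E src tgt w col M u v p"
        unfolding minimal_path_def
      proof (intro conjI notI)
        show "is_path E src tgt u v p" by (rule p(2))
      next
        assume "\<exists>q. is_path E src tgt u v q \<and> path_le w col M q p \<and> (\<exists>c\<in>M. cweight w col c q < cweight w col c p)"
        then obtain q where q: "is_path E src tgt u v q" "path_le w col M q p" "\<exists>c\<in>M. cweight w col c q < cweight w col c p"
          by blast
        have 1: "weight_vec w col M q \<in> weight_vec w col M ` ?Path" using q(1) by (rule imageI[OF CollectI])
        have 2: "\<forall>c\<in>M. weight_vec w col M q c \<le> x c" using q(2) p(1) wvc by (simp add: path_le_def)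
        have 3: "\<exists>c\<in>M. weight_vec w col M q c < x c" using q(3) p(1) wvc by auto
        show False using Mn_D[OF x 1 2] 3 by blast
      qed
      then show "x \<in> weight_vec w col M ` ?Min" unfolding p(1) by (rule imageI[OF CollectI])
    qed
  qed
  have bound: "card (weight_vec w col M ` ?Min) \<le> card M ^ (card V - 1)"
    unfolding minimg img by (rule main[OF G fM assms(5-7)])
  have finPath: "finite ?Path"
  proof (rule finite_subset[OF _ finite_subset_distinct[OF assms(3)]])
    show "?Path \<subseteq> {xs. set xs \<subseteq> E \<and> distinct xs}"
    proof
      fix p assume "p \<in> ?Path"
      then have ip: "is_path E src tgt u v p" by simp
      then have "distinct (map tgt p)" by (simp add: is_path_def path_verts_def)
      then have "distinct p" by (rule distinct_map[THEN iffD1, THEN conjunct1])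
      with ip show "p \<in> {xs. set xs \<subseteq> E \<and> distinct xs}" by (simp add: is_path_def)
    qed
  qed
  have SMin: "S \<subseteq> ?Min" using assms(8) by blast
  have MinPath: "?Min \<subseteq> ?Path" by (auto simp: minimal_path_def)
  have finMin: "finite ?Min" by (rule finite_subset[OF MinPath finPath])
  have finS: "finite S" by (rule finite_subset[OF SMin finMin])
  have inj: "inj_on (weight_vec w col M) S"
  proof (rule inj_onI)
    fix p q assume pq: "p \<in> S" "q \<in> S" "weight_vec w col M p = weight_vec w col M q"
    show "p = q"
    proof (rule ccontr)
      assume "p \<noteq> q"
      then have "incomparable w col M p q" using assms(9) pq by blast
      moreover have "path_le w col M p q"
        unfolding path_le_def
      proof
        fix c assume c: "c \<in> M"
        have "weight_vec w col M p c = weight_vec w col M q c" using pq(3) by simp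
        then show "cweight w col c p \<le> cweight w col c q" using wvc[OF c] by simp
      qed
      ultimately show False by (simp add: incomparable_def)
    qed
  qed
  have "card S = card (weight_vec w col M ` S)" by (rule card_image[OF inj, symmetric])
  also have "\<dots> \<le> card (weight_vec w col M ` ?Min)"
    by (rule card_mono[OF finite_imageI[OF finMin] image_mono[OF SMin]])
  finally have "card S \<le> card M ^ (card V - 1)" using bound by linarith
  then show ?thesis using finS bound by simp
qed

end
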